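(* Let $R>0$ and let $t\mapsto p_t$, $t\in[0,1]$, be a convex curve from $e_R^1$ to $e_R^2$ contained in $T(e_R^1,e_R^2)$. Then for all $0\le t_1<t_2<t_3\le 1$ we have $p_{t_2}\in T(p_{t_1},p_{t_3})$.
   Context: Let $Q=[0,\infty)\times[0,\infty)\subset\mathbb{R}^2$, $e_R^1=(R,0)$, $e_R^2=(0,R)$, and let $\arg(p)\in[0,\pi/2]$ denote the polar angle of $p\in Q\setminus\{0\}$. For $u,w\in Q$ with $\arg(u)<\arg(w)$ define $T(u,w)=\{\lambda u+\mu w\in Q:\ \lambda\ge0,\ \mu\ge0,\ \lambda+\mu\ge1,\ \lambda+1\ge\mu,\ \mu+1\ge\lambda\}$. A curve $t\mapsto p_t$ in $Q$, $t\in[0,1]$, from $e_R^1$ to $e_R^2$ (i.e. $p_0=e_R^1$, $p_1=e_R^2$) is called convex if it is continuous, $t\mapsto\arg(p_t)$ is strictly increasing, and the bounded component of $Q\setminus\{p_t: t\in[0,1]\}$ is convex. *)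

theory Defs
  imports "HOL-Analysis.Analysis"
begin

definition quadQ :: "(real \<times> real) set" where
  "quadQ = {p. fst p \<ge> 0 \<and> snd p \<ge> 0}"

definition polar_arg :: "real \<times> real \<Rightarrow> real" where
  "polar_arg p = Arg (Complex (fst p) (snd p))"

definition eR1 :: "real \<Rightarrow> real \<times> real" where "eR1 R = (R, 0)"
definition eR2 :: "real \<Rightarrow> real \<times> real" where "eR2 R = (0, R)"

definition Tset :: "real \<times> real \<Rightarrow> real \<times> real \<Rightarrow> (real \<times> real) set" where
  "Tset u w = {q. q \<in> quadQ \<and> (\<exists>la mu. q = la *\<^sub>R u + mu *\<^sub>R w \<and> la \<ge> 0 \<and> mu \<ge> 0
       \<and> la + mu \<ge> 1 \<and> la + 1 \<ge> mu \<and> mu + 1 \<ge> la)}"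

text \<open>Convex curve in Q from a to b parametrised on [0,1]: continuous, with values in
  Q minus the origin, strictly increasing polar angle, and the bounded component of
  Q minus the trace is convex (stated for every bounded component).\<close>
definition convex_curve :: "(real \<Rightarrow> real \<times> real) \<Rightarrow> real \<times> real \<Rightarrow> real \<times> real \<Rightarrow> bool" where
  "convex_curve p a b \<longleftrightarrow>
     continuous_on {0..1} p \<and> p ` {0..1} \<subseteq> quadQ - {0} \<and> p 0 = a \<and> p 1 = b \<and>
     strict_mono_on {0..1} (\<lambda>t. polar_arg (p t)) \<and>
     (\<forall>C \<in> components (quadQ - p ` {0..1}). bounded C \<longrightarrow> convex C)"

end

theory Submission
  imports Defs
begin

definition cpx :: "real \<times> real \<Rightarrow> complex" where "cpx p = Complex (fst p) (snd p)"
definition dt :: "real \<times> real \<Rightarrow> real \<times> real \<Rightarrow> real" where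
  "dt a b = fst a * snd b - snd a * fst b"

lemma polar:
  assumes "p \<in> quadQ" "p \<noteq> 0"
  shows "fst p = cmod (cpx p) * cos (polar_arg p)" "snd p = cmod (cpx p) * sin (polar_arg p)"
    "0 \<le> polar_arg p" "polar_arg p \<le> pi/2" "cmod (cpx p) > 0"
proof -
  have nz: "cpx p \<noteq> 0" using assms(2) by (cases p) (auto simp: cpx_def complex_eq_iff zero_prod_def)
  have e: "cpx p = of_real (cmod (cpx p)) * exp (\<i> * of_real (Arg (cpx p)))"
    using Arg_eq[OF nz] .
  have "Re (cpx p) = cmod (cpx p) * cos (Arg (cpx p))"
    by (subst e) (simp add: Re_exp Im_exp)
  then show "fst p = cmod (cpx p) * cos (polar_arg p)" by (simp add: cpx_def polar_arg_def)
  have "Im (cpx p) = cmod (cpx p) * sin (Arg (cpx p))"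
    by (subst e) (simp add: Re_exp Im_exp)
  then show "snd p = cmod (cpx p) * sin (polar_arg p)" by (simp add: cpx_def polar_arg_def)
  show "0 \<le> polar_arg p" using assms(1) by (simp add: polar_arg_def Arg_less_0 cpx_def quadQ_def)
  have "\<bar>Arg (cpx p)\<bar> \<le> pi/2" using assms(1) Arg_Re_nonneg[of "cpx p"] by (simp add: cpx_def quadQ_def)
  then show "polar_arg p \<le> pi/2" unfolding polar_arg_def cpx_def by linarith
  show "cmod (cpx p) > 0" using nz by simp
qed

lemma dt_polar:
  assumes "a \<in> quadQ" "a \<noteq> 0" "b \<in> quadQ" "b \<noteq> 0"
  shows "dt a b = cmod (cpx a) * cmod (cpx b) * sin (polar_arg b - polar_arg a)"
  using polar[OF assms(1,2)] polar[OF assms(3,4)]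
  by (simp add: dt_def sin_diff algebra_simps)

lemma arg_e1: "R > 0 \<Longrightarrow> polar_arg (eR1 R) = 0"
  by (simp add: polar_arg_def eR1_def Complex_eq)

lemma arg_e2: "R > 0 \<Longrightarrow> polar_arg (eR2 R) = pi/2"
proof -
  assume "R > 0"
  have "Complex 0 R = rcis R (pi/2)" by (simp add: rcis_def cis.ctr complex_eq_iff)
  then show ?thesis using Arg_rcis[of "pi/2" R] \<open>R>0\<close> by (simp add: polar_arg_def eR2_def)
qed

lemma arg_scale: "c > 0 \<Longrightarrow> polar_arg (c *\<^sub>R x) = polar_arg x"
proof -
  assume "c > 0"
  have "cpx (c *\<^sub>R x) = of_real c * cpx x" by (simp add: cpx_def complex_eq_iff)
  then have "Arg (cpx (c *\<^sub>R x)) = Arg (cpx x)" using \<open>c>0\<close> by simp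
  then show ?thesis by (simp add: polar_arg_def cpx_def)
qed

lemma cont_polar_arg: "continuous_on (quadQ - {0}) polar_arg"
proof -
  have "continuous_on (quadQ - {0}) (\<lambda>x. Arg (cpx x))"
  proof (intro continuous_on_Arg')
    show "continuous_on (quadQ - {0}) cpx" unfolding cpx_def Complex_eq
      by (intro continuous_intros)
    fix z assume "z \<in> quadQ - {0}"
    then show "cpx z \<notin> \<real>\<^sub>\<le>\<^sub>0"
      by (cases z) (auto simp: complex_nonpos_Reals_iff cpx_def quadQ_def zero_prod_def)
  qed
  then show ?thesis by (simp add: polar_arg_def cpx_def)
qed

lemma cramer:
  assumes "dt u w \<noteq> 0"
  shows "v = (dt v w / dt u w) *\<^sub>R u + (dt u v / dt u w) *\<^sub>R w"
proof -
  obtain a b where u: "u = (a,b)" by (cases u)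
  obtain c d where v: "v = (c,d)" by (cases v)
  obtain e f where w: "w = (e,f)" by (cases w)
  have D: "a*f - b*e \<noteq> 0" using assms by (simp add: dt_def u w)
  have 1: "(c*f - d*e) * a + (a*d - b*c) * e = c * (a*f - b*e)" by algebra
  have 2: "(c*f - d*e) * b + (a*d - b*c) * f = d * (a*f - b*e)" by algebra
  have "c = ((c*f - d*e) * a + (a*d - b*c) * e) / (a*f - b*e)" using 1 D by simp
  moreover have "d = ((c*f - d*e) * b + (a*d - b*c) * f) / (a*f - b*e)" using 2 D by simp
  ultimately show ?thesis by (simp add: u v w dt_def add_divide_distrib)
qed

lemma Tbound:
  assumes "q \<in> Tset (eR1 R) (eR2 R)" "R > 0"
  shows "fst q - snd q \<le> R" "snd q - fst q \<le> R" "fst q \<ge> 0" "snd q \<ge> 0"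
proof -
  obtain la mu where q: "q = la *\<^sub>R (R,0) + mu *\<^sub>R (0,R)" "la + 1 \<ge> mu" "mu + 1 \<ge> la"
    and Q: "q \<in> quadQ"
    using assms unfolding Tset_def eR1_def eR2_def by blast
  have f: "fst q = la * R" "snd q = mu * R" using q by auto
  have m1: "(la - mu) * R \<le> 1 * R" using mult_right_mono[of "la - mu" 1 R] q assms(2) by auto
  have m2: "(mu - la) * R \<le> 1 * R" using mult_right_mono[of "mu - la" 1 R] q assms(2) by auto
  show "fst q - snd q \<le> R" using m1 f by (simp add: algebra_simps)
  show "snd q - fst q \<le> R" using m2 f by (simp add: algebra_simps)
  show "fst q \<ge> 0" "snd q \<ge> 0" using Q by (auto simp: quadQ_def)
qed

lemma Dp:
  fixes xu yu xw yw R :: real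
  assumes "0 \<le> xu" "0 \<le> yu" "0 \<le> xw" "0 \<le> yw" "xu - yu \<le> R" "yw - xw \<le> R" "R > 0"
  shows "xu*yw - yu*xw \<le> R*yu + R*yw"
proof (cases "xu \<le> R")
  case True
  have "yw * (R - xu) \<ge> 0" "yu * xw \<ge> 0" "R * yu \<ge> 0" using True assms by auto
  then show ?thesis by (simp add: algebra_simps)
next
  case False
  have a: "(xu - R) * (R + xw) \<le> yu * (R + xw)" by (rule mult_right_mono) (use assms in auto)
  have b: "(xu - R) * yw \<le> (xu - R) * (R + xw)" by (rule mult_left_mono) (use assms False in auto)
  show ?thesis using a b by (simp add: algebra_simps)
qed

context
  fixes R :: real and p :: "real \<Rightarrow> real \<times> real"
  assumes R: "R > 0" and cc: "convex_curve p (eR1 R) (eR2 R)"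
begin

lemma pQ: "t \<in> {0..1} \<Longrightarrow> p t \<in> quadQ" "t \<in> {0..1} \<Longrightarrow> p t \<noteq> 0"
proof -
  assume "t \<in> {0..1}"
  then have "p t \<in> p ` {0..1}" by blast
  then show "p t \<in> quadQ" using cc unfolding convex_curve_def by blast
next
  assume "t \<in> {0..1}"
  then have "p t \<in> p ` {0..1}" by blast
  then show "p t \<noteq> 0" using cc unfolding convex_curve_def by blast
qed

lemma smono: "strict_mono_on {0..1} (\<lambda>t. polar_arg (p t))"
  using cc unfolding convex_curve_def by auto

lemma pcont: "continuous_on {0..1} p"
  using cc unfolding convex_curve_def by auto

lemma th0: "polar_arg (p 0) = 0" and th1: "polar_arg (p 1) = pi/2"
  using cc R arg_e1 arg_e2 unfolding convex_curve_def by auto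

lemma th_cont: "continuous_on {0..1} (\<lambda>t. polar_arg (p t))"
  by (rule continuous_on_compose2[OF cont_polar_arg pcont]) (use pQ in auto)

lemma th_inj: "t \<in> {0..1} \<Longrightarrow> t' \<in> {0..1} \<Longrightarrow> polar_arg (p t) = polar_arg (p t') \<Longrightarrow> t = t'"
  using smono unfolding strict_mono_on_def by (metis less_irrefl linorder_neqE_linordered_idom)

lemma same_ray:
  assumes "c > 0" "c' > 0" "t \<in> {0..1}" "t' \<in> {0..1}" "c *\<^sub>R p t = c' *\<^sub>R p t'"
  shows "t = t' \<and> c = c'"
proof -
  have "polar_arg (p t) = polar_arg (p t')"
    using arg_scale[OF assms(1), of "p t"] arg_scale[OF assms(2), of "p t'"] assms(5) by simp
  then have tt: "t = t'" using th_inj assms by blast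
  then have "(c - c') *\<^sub>R p t = 0" using assms(5) by (simp add: algebra_simps)
  then have "c = c'" using pQ(2)[OF assms(3)] by simp
  with tt show ?thesis by simp
qed

lemma surj:
  assumes "x \<in> quadQ" "x \<noteq> 0"
  shows "\<exists>t\<in>{0..1}. \<exists>c>0. x = c *\<^sub>R p t"
proof -
  have "\<exists>t. 0 \<le> t \<and> t \<le> 1 \<and> polar_arg (p t) = polar_arg x"
    by (rule IVT') (use polar[OF assms] th0 th1 th_cont in auto)
  then obtain t where t: "t \<in> {0..1}" "polar_arg (p t) = polar_arg x" by auto
  note px = polar[OF pQ[OF t(1)]]
  note xx = polar[OF assms]
  define c where "c = cmod (cpx x) / cmod (cpx (p t))"
  have "c > 0" using px xx by (simp add: c_def)
  moreover have "x = c *\<^sub>R p t"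
    using px xx t(2) by (simp add: prod_eq_iff c_def)
  ultimately show ?thesis using t by blast
qed

definition "VV = (\<lambda>z. fst z *\<^sub>R p (snd z)) ` ({0..1} \<times> {0..1})"
definition "WW = {c *\<^sub>R p t | c t. c \<ge> 1 \<and> t \<in> {0..1}}"

lemma VV_compact: "compact VV"
  unfolding VV_def
proof (rule compact_continuous_image)
  show "compact ({0..1::real} \<times> {0..1::real})" by (intro compact_Times compact_Icc)
  have "continuous_on ({0..1} \<times> {0..1}) (\<lambda>z. p (snd z))"
    by (rule continuous_on_compose2[OF pcont]) (auto intro: continuous_intros)
  then show "continuous_on ({0..1} \<times> {0..1}) (\<lambda>z::real\<times>real. fst z *\<^sub>R p (snd z))"
    by (intro continuous_intros)
qed

lemma WW_closed: "closed WW"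
  unfolding closed_sequential_limits
proof (intro allI impI, elim conjE)
  fix x l assume xW: "\<forall>n. x n \<in> WW" and xl: "x \<longlonglongrightarrow> l"
  have "\<forall>n. \<exists>c t. c \<ge> 1 \<and> t \<in> {0..1} \<and> x n = c *\<^sub>R p t" using xW unfolding WW_def by blast
  then obtain c t where ct: "\<And>n. c n \<ge> 1 \<and> t n \<in> {0..1} \<and> x n = c n *\<^sub>R p (t n)"
    by metis
  have "seq_compact {0..1::real}" by (intro compact_imp_seq_compact compact_Icc)
  then obtain t0 r where t0: "t0 \<in> {0..1}" "strict_mono r" "(t \<circ> r) \<longlonglongrightarrow> t0"
    unfolding seq_compact_def using ct by metis
  have pt: "(\<lambda>n. p ((t \<circ> r) n)) \<longlonglongrightarrow> p t0"
    by (rule continuous_on_tendsto_compose[OF pcont t0(3) t0(1)]) (use ct in auto)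
  have xr: "(x \<circ> r) \<longlonglongrightarrow> l" by (rule LIMSEQ_subseq_LIMSEQ[OF xl t0(2)])
  have ceq: "c (r n) = norm (x (r n)) / norm (p (t (r n)))" for n
  proof -
    have "p (t (r n)) \<noteq> 0" using pQ(2) ct by blast
    moreover have "c (r n) \<ge> 1" using ct by blast
    ultimately show ?thesis using ct[of "r n"] by simp
  qed
  have nz0: "p t0 \<noteq> 0" using pQ(2)[OF t0(1)] .
  have "(\<lambda>n. norm (x (r n)) / norm (p (t (r n)))) \<longlonglongrightarrow> norm l / norm (p t0)"
    using xr pt nz0 by (auto intro!: tendsto_intros simp: o_def)
  then have cl: "(\<lambda>n. c (r n)) \<longlonglongrightarrow> norm l / norm (p t0)" using ceq by simp
  have c1: "1 \<le> norm l / norm (p t0)"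
    by (rule LIMSEQ_le_const[OF cl]) (use ct in auto)
  have "(\<lambda>n. c (r n) *\<^sub>R p (t (r n))) \<longlonglongrightarrow> (norm l / norm (p t0)) *\<^sub>R p t0"
    using cl pt by (auto intro!: tendsto_intros simp: o_def)
  moreover have "(\<lambda>n. c (r n) *\<^sub>R p (t (r n))) = x \<circ> r" using ct by (auto simp: o_def)
  ultimately have "l = (norm l / norm (p t0)) *\<^sub>R p t0" using xr LIMSEQ_unique by metis
  then show "l \<in> WW" unfolding WW_def using c1 t0(1) by blast
qed

lemma cover: "quadQ \<subseteq> VV \<union> WW"
proof
  fix x assume xQ: "x \<in> quadQ"
  show "x \<in> VV \<union> WW"
  proof (cases "x = 0")
    case True
    then have "x = fst (0::real, 0::real) *\<^sub>R p (snd (0::real,0::real))" by simp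
    then show ?thesis unfolding VV_def by force
  next
    case False
    then obtain t c where tc: "t \<in> {0..1}" "c > 0" "x = c *\<^sub>R p t" using surj xQ by blast
    show ?thesis
    proof (cases "c \<le> 1")
      case True
      then have "x = fst (c, t) *\<^sub>R p (snd (c, t))" using tc by simp
      moreover have "(c,t) \<in> {0..1} \<times> {0..1}" using tc True by auto
      ultimately show ?thesis unfolding VV_def by blast
    next
      case False
      then have "c \<ge> 1" by simp
      then have "x \<in> WW" unfolding WW_def using tc by blast
      then show ?thesis by blast
    qed
  qed
qed

lemma VW: "VV \<inter> WW \<subseteq> p ` {0..1}"
proof
  fix x assume "x \<in> VV \<inter> WW"
  then obtain c t c' t' where a: "c \<in> {0..1}" "t \<in> {0..1}" "x = c *\<^sub>R p t"
    and b: "c' \<ge> 1" "t' \<in> {0..1}" "x = c' *\<^sub>R p t'"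
    unfolding VV_def WW_def by auto
  have "c \<noteq> 0" using a b pQ(2)[OF b(2)] by auto
  then have "c > 0" using a by auto
  then have "t = t' \<and> c = c'" using same_ray[of c c' t t'] a b by auto
  then have "c = 1" using a b by auto
  then show "x \<in> p ` {0..1}" using a by auto
qed

abbreviation "SS \<equiv> quadQ - p ` {0..1}"
abbreviation "CC \<equiv> connected_component_set SS 0"

lemma zero_SS: "0 \<in> SS"
  using pQ(2) by (auto simp: quadQ_def)

lemma CC_W: "CC \<inter> WW = {}" and CC_V: "CC \<subseteq> VV"
proof -
  have conn: "connected CC" by (rule connected_connected_component)
  have sub: "CC \<subseteq> VV \<union> WW" using cover connected_component_subset by blast
  have dis: "VV \<inter> WW \<inter> CC = {}" using VW connected_component_subset by blast
  have "0 \<in> CC" using zero_SS by simp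
  moreover have "0 \<in> VV"
  proof -
    have "(0::real\<times>real) = fst (0::real, 0::real) *\<^sub>R p (snd (0::real,0::real))" by simp
    then show ?thesis unfolding VV_def by force
  qed
  ultimately have ne: "VV \<inter> CC \<noteq> {}" by blast
  have "closed VV" by (rule compact_imp_closed[OF VV_compact])
  then show "CC \<inter> WW = {}" using conn sub dis ne WW_closed unfolding connected_closed by blast
  then show "CC \<subseteq> VV" using sub by blast
qed

lemma CC_convex: "convex CC"
proof -
  have "CC \<in> components SS" using zero_SS components_iff by blast
  moreover have "bounded CC" using CC_V compact_imp_bounded[OF VV_compact] bounded_subset by blast
  ultimately show ?thesis using cc unfolding convex_curve_def by blast
qed

lemma CC_in: assumes "t \<in> {0..1}" "0 \<le> r" "r < 1" shows "r *\<^sub>R p t \<in> CC"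
proof -
  let ?T = "(\<lambda>s. s *\<^sub>R p t) ` {0..r}"
  have "connected ?T" by (intro connected_continuous_image connected_Icc continuous_intros)
  moreover have "0 \<in> ?T" using assms by force
  moreover have "?T \<subseteq> SS"
  proof
    fix y assume "y \<in> ?T"
    then obtain s where s: "s \<in> {0..r}" "y = s *\<^sub>R p t" by blast
    have "y \<in> quadQ" using pQ(1)[OF assms(1)] s by (auto simp: quadQ_def)
    moreover have "y \<notin> p ` {0..1}"
    proof
      assume "y \<in> p ` {0..1}"
      then obtain t' where t': "t' \<in> {0..1}" "y = p t'" by blast
      have "s \<noteq> 0" using s t' pQ(2)[OF t'(1)] by auto
      then have "s > 0" using s by auto
      then have "s = 1" using same_ray[of s 1 t t'] s t' assms by auto
      then show False using s assms by auto
    qed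
    ultimately show "y \<in> SS" by blast
  qed
  moreover have "r *\<^sub>R p t \<in> ?T" using assms by auto
  ultimately show ?thesis using connected_component_maximal[of 0 ?T SS] by blast
qed

lemma dt_pos: assumes "t \<in> {0..1}" "t' \<in> {0..1}" "t < t'" shows "dt (p t) (p t') > 0"
proof -
  note a = polar[OF pQ[OF assms(1)]] and b = polar[OF pQ[OF assms(2)]]
  have lt: "polar_arg (p t) < polar_arg (p t')" using smono assms unfolding strict_mono_on_def by blast
  have "sin (polar_arg (p t') - polar_arg (p t)) > 0"
    by (rule sin_gt_zero) (use lt a b in auto)
  then show ?thesis using dt_polar[OF pQ[OF assms(1)] pQ[OF assms(2)]] a b by simp
qed

lemma dt_nonneg: assumes "t \<in> {0..1}" "t' \<in> {0..1}" "t \<le> t'" shows "dt (p t) (p t') \<ge> 0"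
proof (cases "t = t'")
  case True then show ?thesis by (simp add: dt_def)
next
  case False then show ?thesis using dt_pos[OF assms(1,2)] assms(3) by force
qed

lemma beyond:
  assumes "0 \<le> t1" "t1 < t2" "t2 < t3" "t3 \<le> 1"
  shows "dt (p t1) (p t2) + dt (p t2) (p t3) \<ge> dt (p t1) (p t3)"
proof (rule ccontr)
  assume neg: "\<not> ?thesis"
  have i: "t1 \<in> {0..1}" "t2 \<in> {0..1}" "t3 \<in> {0..1}" using assms by auto
  define u where "u = p t1" define v where "v = p t2" define w where "w = p t3"
  define D where "D = dt u w"
  have D: "D > 0" unfolding D_def u_def w_def using dt_pos i assms by auto
  define la where "la = dt v w / D" define mu where "mu = dt u v / D"
  have la: "la \<ge> 0" unfolding la_def using D dt_nonneg[OF i(2,3)] assms by (simp add: v_def w_def)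
  have mu: "mu \<ge> 0" unfolding mu_def using D dt_nonneg[OF i(1,2)] assms by (simp add: v_def u_def)
  have veq: "v = la *\<^sub>R u + mu *\<^sub>R w"
    using D cramer[of u w v] unfolding la_def mu_def D_def by simp
  define s where "s = la + mu"
  have s1: "s < 1" using neg D unfolding s_def la_def mu_def
    by (simp add: u_def v_def w_def D_def add_divide_distrib[symmetric] divide_less_eq)
  have s0: "s > 0"
  proof (rule ccontr)
    assume "\<not> s > 0"
    then have "la = 0" "mu = 0" using la mu s_def by auto
    then have "v = 0" using veq by simp
    then show False using pQ(2)[OF i(2)] v_def by simp
  qed
  define r where "r = (1 + s) / 2"
  have r: "0 \<le> r" "r < 1" "s < r" using s0 s1 by (auto simp: r_def)
  have "r *\<^sub>R u \<in> CC" "r *\<^sub>R w \<in> CC" using CC_in[OF i(1) r(1,2)] CC_in[OF i(3) r(1,2)] u_def w_def by auto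
  then have "(la / s) *\<^sub>R (r *\<^sub>R u) + (mu / s) *\<^sub>R (r *\<^sub>R w) \<in> CC"
  proof -
    have "la / s + mu / s = 1" using s0 by (simp add: s_def add_divide_distrib[symmetric])
    moreover have "la / s \<ge> 0" "mu / s \<ge> 0" using la mu s0 by auto
    ultimately show ?thesis using CC_convex \<open>r *\<^sub>R u \<in> CC\<close> \<open>r *\<^sub>R w \<in> CC\<close>
      unfolding convex_def by blast
  qed
  moreover have "(la / s) *\<^sub>R (r *\<^sub>R u) + (mu / s) *\<^sub>R (r *\<^sub>R w) = (r / s) *\<^sub>R v"
    using veq by (simp add: scaleR_add_right mult.commute)
  moreover have "(r / s) *\<^sub>R v \<in> WW"
  proof -
    have "r / s \<ge> 1" using r s0 by simp
    then show ?thesis unfolding WW_def v_def using i(2) by blast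
  qed
  ultimately have "(r / s) *\<^sub>R v \<in> CC \<inter> WW" by simp
  then show False using CC_W by simp
qed

end


theorem lemma3p6:
  fixes R :: real and p :: "real \<Rightarrow> real \<times> real"
  assumes "R > 0"
    and "convex_curve p (eR1 R) (eR2 R)"
    and "p ` {0..1} \<subseteq> Tset (eR1 R) (eR2 R)"
  shows "\<forall>t1 t2 t3. 0 \<le> t1 \<and> t1 < t2 \<and> t2 < t3 \<and> t3 \<le> 1 \<longrightarrow> p t2 \<in> Tset (p t1) (p t3)"
proof (intro allI impI, elim conjE)
  fix t1 t2 t3 :: real
  assume a: "0 \<le> t1" "t1 < t2" "t2 < t3" "t3 \<le> 1"
  note R = assms(1) and cc = assms(2)
  have i: "t1 \<in> {0..1}" "t2 \<in> {0..1}" "t3 \<in> {0..1}" using a by auto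
  define u where "u = p t1" define v where "v = p t2" define w where "w = p t3"
  have uT: "u \<in> Tset (eR1 R) (eR2 R)" and vT: "v \<in> Tset (eR1 R) (eR2 R)"
    and wT: "w \<in> Tset (eR1 R) (eR2 R)" using assms(3) i u_def v_def w_def by auto
  note tu = Tbound[OF uT R] and tv = Tbound[OF vT R] and tw = Tbound[OF wT R]
  define D where "D = dt u w"
  have D: "D > 0" unfolding D_def u_def w_def using dt_pos[OF R cc] i a by auto
  define la where "la = dt v w / D" define mu where "mu = dt u v / D"
  have la: "la \<ge> 0" unfolding la_def using D dt_nonneg[OF R cc i(2,3)] a by (simp add: v_def w_def)
  have mu: "mu \<ge> 0" unfolding mu_def using D dt_nonneg[OF R cc i(1,2)] a by (simp add: v_def u_def)
  have veq: "v = la *\<^sub>R u + mu *\<^sub>R w"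
    using D cramer[of u w v] unfolding la_def mu_def D_def by simp
  have vx: "fst v = la * fst u + mu * fst w" and vy: "snd v = la * snd u + mu * snd w"
    using veq by auto
  have dtuv: "dt u v = mu * D" and dtvw: "dt v w = la * D" using D by (auto simp: la_def mu_def)
  have sum: "la + mu \<ge> 1"
  proof -
    have "dt u v + dt v w \<ge> D" using beyond[OF R cc a] by (simp add: u_def v_def w_def D_def)
    then have "(la + mu) * D \<ge> 1 * D" using dtuv dtvw by (simp add: algebra_simps)
    then show ?thesis using D by (simp add: mult_le_cancel_right)
  qed
  have c1: "la \<le> mu + 1"
  proof (cases "t1 = 0")
    case True
    then have u: "u = (R, 0)" using cc unfolding u_def convex_curve_def eR1_def by simp
    have "mu * (snd w - fst w) \<le> mu * R" using mult_left_mono[OF tw(2) mu] .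
    moreover have "la * R + mu * fst w - mu * snd w \<le> R" using tv(1) vx vy u by simp
    ultimately have "(la - mu) * R \<le> 1 * R" by (simp add: algebra_simps)
    then show ?thesis using R by (simp add: mult_le_cancel_right)
  next
    case False
    then have t1p: "0 < t1" using a by simp
    have B: "dt (p 0) u + dt u v \<ge> dt (p 0) v"
      using beyond[OF R cc order_refl t1p a(2) _] a unfolding u_def v_def by auto
    have p0: "p 0 = (R, 0)" using cc unfolding convex_curve_def eR1_def by simp
    have B': "R * snd u + mu * D - R * snd v \<ge> 0" using B p0 dtuv by (simp add: dt_def)
    have Dp': "R * snd u + R * snd w - D \<ge> 0"
      using Dp[OF tu(3,4) tw(3,4) tu(1) tw(2) R] by (simp add: D_def dt_def)
    have m: "mu * (R * snd u + R * snd w - D) \<ge> 0" using Dp' mu by simp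
    have eq: "R * snd u * (1 - la + mu) = (R * snd u + mu * D - R * snd v) + mu * (R * snd u + R * snd w - D)"
      using vy by (simp add: algebra_simps)
    have pos: "R * snd u > 0"
    proof -
      note pu = polar[OF pQ(1)[OF R cc i(1)] pQ(2)[OF R cc i(1)]]
      have "polar_arg (p 0) < polar_arg (p t1)" using smono[OF R cc] t1p i(1)
        unfolding strict_mono_on_def by auto
      then have "polar_arg (p t1) > 0" using th0[OF R cc] by simp
      then have "sin (polar_arg (p t1)) > 0" using pu by (intro sin_gt_zero) auto
      then show ?thesis using pu R by (simp add: u_def)
    qed
    have "R * snd u * (1 - la + mu) \<ge> 0" using eq B' m by simp
    then have "1 - la + mu \<ge> 0" using pos by (simp add: zero_le_mult_iff)
    then show ?thesis by simp
  qed
  have c2: "mu \<le> la + 1"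
  proof (cases "t3 = 1")
    case True
    then have w: "w = (0, R)" using cc unfolding w_def convex_curve_def eR2_def by simp
    have "la * (fst u - snd u) \<le> la * R" using mult_left_mono[OF tu(1) la] .
    moreover have "la * snd u + mu * R - la * fst u \<le> R" using tv(2) vx vy w by simp
    ultimately have "(mu - la) * R \<le> 1 * R" by (simp add: algebra_simps)
    then show ?thesis using R by (simp add: mult_le_cancel_right)
  next
    case False
    then have t3p: "t3 < 1" using a by simp
    have B: "dt v w + dt w (p 1) \<ge> dt v (p 1)"
      using beyond[OF R cc _ a(3) t3p order_refl] a unfolding w_def v_def by auto
    have p1: "p 1 = (0, R)" using cc unfolding convex_curve_def eR2_def by simp
    have B': "la * D + R * fst w - R * fst v \<ge> 0" using B p1 dtvw by (simp add: dt_def algebra_simps)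
    have Dp': "R * fst u + R * fst w - D \<ge> 0"
      using Dp[OF tw(4,3) tu(4,3) tw(2) tu(1) R] by (simp add: D_def dt_def algebra_simps)
    have m: "la * (R * fst u + R * fst w - D) \<ge> 0" using Dp' la by simp
    have eq: "R * fst w * (1 - mu + la) = (la * D + R * fst w - R * fst v) + la * (R * fst u + R * fst w - D)"
      using vx by (simp add: algebra_simps)
    have pos: "R * fst w > 0"
    proof -
      note pw = polar[OF pQ(1)[OF R cc i(3)] pQ(2)[OF R cc i(3)]]
      have "polar_arg (p t3) < polar_arg (p 1)" using smono[OF R cc] t3p i(3)
        unfolding strict_mono_on_def by auto
      then have "polar_arg (p t3) < pi/2" using th1[OF R cc] by simp
      then have "cos (polar_arg (p t3)) > 0" using pw by (intro cos_gt_zero_pi) auto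
      then show ?thesis using pw R by (simp add: w_def)
    qed
    have "R * fst w * (1 - mu + la) \<ge> 0" using eq B' m by simp
    then have "1 - mu + la \<ge> 0" using pos by (simp add: zero_le_mult_iff)
    then show ?thesis by simp
  qed
  have vQ: "v \<in> quadQ" using pQ(1)[OF R cc i(2)] v_def by simp
  show "p t2 \<in> Tset (p t1) (p t3)"
  proof -
    have "p t2 = la *\<^sub>R p t1 + mu *\<^sub>R p t3 \<and> la \<ge> 0 \<and> mu \<ge> 0 \<and> la + mu \<ge> 1 \<and> la + 1 \<ge> mu \<and> mu + 1 \<ge> la"
      using veq la mu sum c1 c2 u_def v_def w_def by auto
    then show ?thesis unfolding Tset_def using vQ v_def by blast
  qed
qed

end
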